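(* Assume the root system is indecomposable. Let $u \in W$ be rational with $u \neq w_0$, and let $\alpha \in \Delta$ be a simple root with $u^{-1}(\alpha) > 0$ and $u(\alpha) < 0$. Then $s_\alpha u$ is rational.
   Context: $W$ is the Weyl group of a reduced crystallographic root system $\Pi$ with simple roots $\Delta$, positive roots $\Pi_+$, longest element $w_0$, simple reflections $s_\alpha$. $\gamma>0$ means $\gamma\in\Pi_+$. $\alpha\le\beta$ iff $\beta-\alpha$ is a nonnegative integer combination of simple roots. For $A\subseteq\Pi_+$, $\mathrm{Adj}(A) = \{\alpha\in\Pi_+ : \exists\beta\in A,\ \alpha\le\beta\}$. For $u\in W$: $\nu^0(u) = u(\Pi_+)\cap\Pi_+$, $\nu^k(u) = u(\mathrm{Adj}\,\nu^{k-1}(u))\cap\Pi_+$, eventually constant with value $\nu(u)$; $u$ is rational iff $\nu(u) = \emptyset$. *)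

theory Defs
  imports "HOL-Analysis.Analysis"
begin

definition sref :: "'a::euclidean_space \<Rightarrow> 'a \<Rightarrow> 'a" where
  "sref \<alpha> x = x - (2 * (x \<bullet> \<alpha>) / (\<alpha> \<bullet> \<alpha>)) *\<^sub>R \<alpha>"

definition root_system :: "'a::euclidean_space set \<Rightarrow> bool" where
  "root_system R \<longleftrightarrow> finite R \<and> 0 \<notin> R \<and> span R = UNIV
     \<and> (\<forall>\<alpha>\<in>R. sref \<alpha> ` R = R)
     \<and> (\<forall>\<alpha>\<in>R. \<forall>\<beta>\<in>R. 2 * (\<beta> \<bullet> \<alpha>) / (\<alpha> \<bullet> \<alpha>) \<in> \<int>)
     \<and> (\<forall>\<alpha>\<in>R. \<forall>c::real. c *\<^sub>R \<alpha> \<in> R \<longrightarrow> c = 1 \<or> c = -1)"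

definition indecomposable :: "'a::euclidean_space set \<Rightarrow> bool" where
  "indecomposable R \<longleftrightarrow>
     \<not> (\<exists>A B. A \<noteq> {} \<and> B \<noteq> {} \<and> A \<union> B = R \<and> A \<inter> B = {}
            \<and> (\<forall>a\<in>A. \<forall>b\<in>B. a \<bullet> b = 0))"

definition nonneg_comb :: "'a::euclidean_space set \<Rightarrow> 'a \<Rightarrow> bool" where
  "nonneg_comb \<Delta> x \<longleftrightarrow> (\<exists>c::'a \<Rightarrow> nat. x = (\<Sum>\<delta>\<in>\<Delta>. real (c \<delta>) *\<^sub>R \<delta>))"

definition is_base :: "'a::euclidean_space set \<Rightarrow> 'a set \<Rightarrow> bool" where
  "is_base R \<Delta> \<longleftrightarrow> \<Delta> \<subseteq> R \<and> independent \<Delta>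
     \<and> (\<forall>\<beta>\<in>R. nonneg_comb \<Delta> \<beta> \<or> nonneg_comb \<Delta> (- \<beta>))"

definition pos_roots :: "'a::euclidean_space set \<Rightarrow> 'a set \<Rightarrow> 'a set" where
  "pos_roots R \<Delta> = {\<beta>\<in>R. nonneg_comb \<Delta> \<beta>}"

definition root_le :: "'a::euclidean_space set \<Rightarrow> 'a \<Rightarrow> 'a \<Rightarrow> bool" where
  "root_le \<Delta> \<alpha> \<beta> \<longleftrightarrow> nonneg_comb \<Delta> (\<beta> - \<alpha>)"

inductive_set weyl :: "'a::euclidean_space set \<Rightarrow> ('a \<Rightarrow> 'a) set" for R where
  weyl_id: "id \<in> weyl R"
| weyl_step: "\<alpha> \<in> R \<Longrightarrow> w \<in> weyl R \<Longrightarrow> sref \<alpha> \<circ> w \<in> weyl R"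

definition wlen :: "'a::euclidean_space set \<Rightarrow> ('a \<Rightarrow> 'a) \<Rightarrow> nat" where
  "wlen \<Delta> w = (LEAST n. \<exists>ts. length ts = n \<and> set ts \<subseteq> \<Delta>
                         \<and> w = foldr (\<lambda>\<alpha> f. sref \<alpha> \<circ> f) ts id)"

definition longest :: "'a::euclidean_space set \<Rightarrow> 'a set \<Rightarrow> ('a \<Rightarrow> 'a)" where
  "longest R \<Delta> = (THE w. w \<in> weyl R \<and> (\<forall>v\<in>weyl R. wlen \<Delta> v \<le> wlen \<Delta> w))"

definition Adj :: "'a::euclidean_space set \<Rightarrow> 'a set \<Rightarrow> 'a set \<Rightarrow> 'a set" where
  "Adj R \<Delta> A = {\<alpha>\<in>pos_roots R \<Delta>. \<exists>\<beta>\<in>A. root_le \<Delta> \<alpha> \<beta>}"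

fun nu_k :: "'a::euclidean_space set \<Rightarrow> 'a set \<Rightarrow> nat \<Rightarrow> ('a \<Rightarrow> 'a) \<Rightarrow> 'a set" where
  "nu_k R \<Delta> 0 u = u ` pos_roots R \<Delta> \<inter> pos_roots R \<Delta>"
| "nu_k R \<Delta> (Suc k) u = u ` Adj R \<Delta> (nu_k R \<Delta> k u) \<inter> pos_roots R \<Delta>"

definition nu :: "'a::euclidean_space set \<Rightarrow> 'a set \<Rightarrow> ('a \<Rightarrow> 'a) \<Rightarrow> 'a set" where
  "nu R \<Delta> u = (THE S. \<exists>N. \<forall>k\<ge>N. nu_k R \<Delta> k u = S)"

definition rational :: "'a::euclidean_space set \<Rightarrow> 'a set \<Rightarrow> ('a \<Rightarrow> 'a) \<Rightarrow> bool" where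
  "rational R \<Delta> u \<longleftrightarrow> nu R \<Delta> u = {}"

end

theory Submission
  imports Defs
begin


locale rsys =
  fixes R \<Delta> :: "'a::euclidean_space set"
  assumes rs: "root_system R" and base: "is_base R \<Delta>"
begin

lemma finR: "finite R" using rs by (simp add: root_system_def)
lemma zero_notin: "0 \<notin> R" using rs by (simp add: root_system_def)
lemma refl_R: "\<alpha> \<in> R \<Longrightarrow> sref \<alpha> ` R = R" using rs by (simp add: root_system_def)
lemma int_R: "\<alpha> \<in> R \<Longrightarrow> \<beta> \<in> R \<Longrightarrow> 2 * (\<beta> \<bullet> \<alpha>) / (\<alpha> \<bullet> \<alpha>) \<in> \<int>"
  using rs by (simp add: root_system_def)
lemma reduced: "\<alpha> \<in> R \<Longrightarrow> c *\<^sub>R \<alpha> \<in> R \<Longrightarrow> c = 1 \<or> c = -1"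
  using rs by (simp add: root_system_def)
lemma DR: "\<Delta> \<subseteq> R" using base by (simp add: is_base_def)
lemma indep: "independent \<Delta>" using base by (simp add: is_base_def)
lemma finD: "finite \<Delta>" using DR finR finite_subset by blast
lemma R_sign: "\<beta> \<in> R \<Longrightarrow> nonneg_comb \<Delta> \<beta> \<or> nonneg_comb \<Delta> (- \<beta>)"
  using base by (simp add: is_base_def)

lemma nonneg_span: "nonneg_comb \<Delta> x \<Longrightarrow> x \<in> span \<Delta>"
proof -
  assume "nonneg_comb \<Delta> x"
  then obtain c :: "'a \<Rightarrow> nat" where x: "x = (\<Sum>\<delta>\<in>\<Delta>. real (c \<delta>) *\<^sub>R \<delta>)"
    unfolding nonneg_comb_def by blast
  show ?thesis unfolding x
    by (rule span_sum, rule span_scale, rule span_base)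
qed

lemma R_span: "R \<subseteq> span \<Delta>"
proof
  fix x assume "x \<in> R"
  then have "nonneg_comb \<Delta> x \<or> nonneg_comb \<Delta> (- x)" by (rule R_sign)
  then show "x \<in> span \<Delta>"
    using nonneg_span span_neg by fastforce
qed

lemma span_D: "span \<Delta> = UNIV"
proof -
  have "UNIV = span R" using rs by (simp add: root_system_def)
  also have "\<dots> \<subseteq> span \<Delta>" using R_span by (simp add: span_minimal)
  finally show ?thesis by auto
qed

lemma in_spanD[simp]: "x \<in> span \<Delta>" using span_D by auto

definition co :: "'a \<Rightarrow> 'a \<Rightarrow> real" where "co x i = representation \<Delta> x i"

lemma co_add[simp]: "co (x + y) i = co x i + co y i"
  unfolding co_def by (simp add: representation_add indep)
lemma co_diff[simp]: "co (x - y) i = co x i - co y i"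
  unfolding co_def by (simp add: representation_diff indep)
lemma co_neg[simp]: "co (- x) i = - co x i"
  unfolding co_def by (simp add: representation_neg indep)
lemma co_scale[simp]: "co (c *\<^sub>R x) i = c * co x i"
  unfolding co_def by (simp add: representation_scale indep)
lemma co_zero[simp]: "co 0 i = 0"
  unfolding co_def by (simp add: representation_zero)
lemma co_sum: "co (sum f A) i = (\<Sum>a\<in>A. co (f a) i)"
  unfolding co_def by (simp add: representation_sum indep)
lemma co_basis[simp]: "j \<in> \<Delta> \<Longrightarrow> co j i = (if i = j then 1 else 0)"
  unfolding co_def by (simp add: representation_basis indep)
lemma expand: "x = (\<Sum>i\<in>\<Delta>. co x i *\<^sub>R i)"
  unfolding co_def by (rule sum_representation_eq[symmetric]) (auto simp: indep finD)

lemma co_eqI: "(\<And>i. i \<in> \<Delta> \<Longrightarrow> co x i = co y i) \<Longrightarrow> x = y"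
  by (metis (no_types, lifting) expand sum.cong)

lemma nonneg_comb_co: "nonneg_comb \<Delta> x \<longleftrightarrow> (\<forall>i\<in>\<Delta>. co x i \<in> \<nat>)"
proof
  assume "nonneg_comb \<Delta> x"
  then obtain c :: "'a \<Rightarrow> nat" where x: "x = (\<Sum>\<delta>\<in>\<Delta>. real (c \<delta>) *\<^sub>R \<delta>)"
    unfolding nonneg_comb_def by blast
  show "\<forall>i\<in>\<Delta>. co x i \<in> \<nat>"
  proof
    fix i assume i: "i \<in> \<Delta>"
    have "co x i = (\<Sum>\<delta>\<in>\<Delta>. (if \<delta> = i then real (c \<delta>) else 0))"
      unfolding x co_sum by (intro sum.cong) auto
    also have "\<dots> = real (c i)" using i finD by (simp add: sum.delta)
    finally show "co x i \<in> \<nat>" by simp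
  qed
next
  assume h: "\<forall>i\<in>\<Delta>. co x i \<in> \<nat>"
  define c where "c i = nat \<lfloor>co x i\<rfloor>" for i
  have "real (c i) = co x i" if "i \<in> \<Delta>" for i
    using h that unfolding c_def by (auto elim!: Nats_cases)
  then have "x = (\<Sum>\<delta>\<in>\<Delta>. real (c \<delta>) *\<^sub>R \<delta>)"
    by (subst expand) (intro sum.cong; simp)
  then show "nonneg_comb \<Delta> x" unfolding nonneg_comb_def by blast
qed

lemma root_le_co: "root_le \<Delta> a b \<longleftrightarrow> (\<forall>i\<in>\<Delta>. co b i - co a i \<in> \<nat>)"
  unfolding root_le_def nonneg_comb_co by simp

lemma R_int: "x \<in> R \<Longrightarrow> i \<in> \<Delta> \<Longrightarrow> co x i \<in> \<int>"
  using R_sign[of x] nonneg_comb_co Nats_subset_Ints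
  by (metis co_neg minus_minus subsetD Ints_minus)

lemma R_sign_co: "x \<in> R \<Longrightarrow> (\<forall>i\<in>\<Delta>. co x i \<ge> 0) \<or> (\<forall>i\<in>\<Delta>. co x i \<le> 0)"
proof -
  assume "x \<in> R"
  from R_sign[OF this] show ?thesis
    unfolding nonneg_comb_co by (auto simp: Nats_altdef2)
qed

lemma pos_co: "pos_roots R \<Delta> = {x\<in>R. \<forall>i\<in>\<Delta>. co x i \<ge> 0}"
  unfolding pos_roots_def nonneg_comb_co using R_int by (auto simp: Nats_altdef2)

lemma le_co: "a \<in> R \<Longrightarrow> b \<in> R \<Longrightarrow> root_le \<Delta> a b \<longleftrightarrow> (\<forall>i\<in>\<Delta>. co a i \<le> co b i)"
  unfolding root_le_co using R_int by (auto simp: Nats_altdef2)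

lemma root_le_trans: "root_le \<Delta> a b \<Longrightarrow> root_le \<Delta> b c \<Longrightarrow> root_le \<Delta> a c"
  unfolding root_le_co
proof (intro ballI)
  fix i assume "\<forall>i\<in>\<Delta>. co b i - co a i \<in> \<nat>" "\<forall>i\<in>\<Delta>. co c i - co b i \<in> \<nat>" "i \<in> \<Delta>"
  then have "(co c i - co b i) + (co b i - co a i) \<in> \<nat>" by (intro Nats_add) auto
  moreover have "(co c i - co b i) + (co b i - co a i) = co c i - co a i" by simp
  ultimately show "co c i - co a i \<in> \<nat>" by metis
qed

lemma R_nz: "a \<in> R \<Longrightarrow> a \<noteq> 0" using zero_notin by auto
lemma R_sq_pos: "a \<in> R \<Longrightarrow> a \<bullet> a > 0" using R_nz by simp

lemma sref_self: "a \<noteq> 0 \<Longrightarrow> sref a a = - a"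
  unfolding sref_def by (simp add: algebra_simps scaleR_2)

lemma sref_R: "a \<in> R \<Longrightarrow> x \<in> R \<Longrightarrow> sref a x \<in> R"
  using refl_R by blast

lemma neg_R: "a \<in> R \<Longrightarrow> - a \<in> R"
  using sref_R[of a a] sref_self R_nz by metis

lemma sref_inner: "a \<noteq> 0 \<Longrightarrow> sref a x \<bullet> a = - (x \<bullet> a)"
  unfolding sref_def by (simp add: algebra_simps inner_diff_left)

lemma sref_invol: "a \<noteq> 0 \<Longrightarrow> sref a (sref a x) = x"
proof -
  assume a: "a \<noteq> 0"
  have "sref a (sref a x) = sref a x + (2 * (x \<bullet> a) / (a \<bullet> a)) *\<^sub>R a"
    unfolding sref_def[of a "sref a x"] sref_inner[OF a] by (simp add: algebra_simps)
  also have "\<dots> = x" unfolding sref_def by simp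
  finally show ?thesis .
qed

lemma sref_linear: "linear (sref a)"
  unfolding sref_def
  by (rule linearI) (simp_all add: inner_add_left algebra_simps scaleR_add_left add_divide_distrib
      scaleR_diff_left diff_divide_distrib)

lemma co_sref_other: "\<alpha> \<in> \<Delta> \<Longrightarrow> i \<noteq> \<alpha> \<Longrightarrow> co (sref \<alpha> x) i = co x i"
  unfolding sref_def by simp

lemma co_sref_alpha: "\<alpha> \<in> \<Delta> \<Longrightarrow> co (sref \<alpha> x) \<alpha> = co x \<alpha> - 2 * (x \<bullet> \<alpha>) / (\<alpha> \<bullet> \<alpha>)"
  unfolding sref_def by simp

lemma SCS:
  assumes a: "a \<in> R" and b: "b \<in> R" and ab: "a \<noteq> b" "a \<noteq> - b"
  shows "(a \<bullet> b)^2 < (a \<bullet> a) * (b \<bullet> b)"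
proof -
  define l where "l = (a \<bullet> b) / (b \<bullet> b)"
  have bb: "b \<bullet> b > 0" using R_sq_pos b by simp
  have "a \<noteq> l *\<^sub>R b"
  proof
    assume "a = l *\<^sub>R b"
    then have "l = 1 \<or> l = -1" using reduced[OF b] a by simp
    then show False using ab \<open>a = l *\<^sub>R b\<close> by auto
  qed
  then have "(a - l *\<^sub>R b) \<bullet> (a - l *\<^sub>R b) > 0" by simp
  also have "(a - l *\<^sub>R b) \<bullet> (a - l *\<^sub>R b) = a \<bullet> a - 2 * l * (a \<bullet> b) + l * l * (b \<bullet> b)"
    by (simp add: inner_diff_left inner_diff_right inner_commute algebra_simps)
  also have "\<dots> = a \<bullet> a - (a \<bullet> b)^2 / (b \<bullet> b)"
    using bb unfolding l_def by (simp add: field_simps power2_eq_square)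
  finally have "(a \<bullet> b)^2 / (b \<bullet> b) < a \<bullet> a" by simp
  then show ?thesis using bb by (simp add: divide_less_eq mult.commute)
qed

lemma lemA:
  assumes a: "a \<in> R" and b: "b \<in> R" and ab: "a \<noteq> b" and pos: "a \<bullet> b > 0"
  shows "a - b \<in> R"
proof -
  have aa: "a \<bullet> a > 0" and bb: "b \<bullet> b > 0" using R_sq_pos a b by auto
  have anb: "a \<noteq> - b"
  proof
    assume "a = - b"
    then have "a \<bullet> b = - (b \<bullet> b)" by simp
    with pos bb show False by linarith
  qed
  have sc: "(a \<bullet> b)^2 < (a \<bullet> a) * (b \<bullet> b)" by (rule SCS[OF a b ab anb])
  define m where "m = 2 * (a \<bullet> b) / (b \<bullet> b)"
  define n where "n = 2 * (a \<bullet> b) / (a \<bullet> a)"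
  have mI: "m \<in> \<int>" unfolding m_def using int_R[OF b a] .
  have nI: "n \<in> \<int>" unfolding n_def using int_R[OF a b] by (simp add: inner_commute)
  have mp: "m > 0" "n > 0" unfolding m_def n_def using pos aa bb by auto
  have "m * n = 4 * (a \<bullet> b)^2 / ((a \<bullet> a) * (b \<bullet> b))"
    unfolding m_def n_def by (simp add: power2_eq_square field_simps)
  also have "\<dots> < 4" using sc aa bb by (simp add: divide_less_eq)
  finally have mn: "m * n < 4" .
  from mI obtain M :: int where M: "m = of_int M" by (auto elim: Ints_cases)
  from nI obtain N :: int where N: "n = of_int N" by (auto elim: Ints_cases)
  have "M > 0" "N > 0" "M * N < 4" using mp mn M N by (auto simp flip: of_int_mult)
  then have "M = 1 \<or> N = 1"
  proof -
    assume h: "M > 0" "N > 0" "M * N < 4"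
    show ?thesis
    proof (rule ccontr)
      assume "\<not> (M = 1 \<or> N = 1)"
      then have "M \<ge> 2" "N \<ge> 2" using h by auto
      then have "M * N \<ge> 2 * 2" by (intro mult_mono) auto
      then show False using h by simp
    qed
  qed
  then show ?thesis
  proof
    assume "M = 1"
    then have "m = 1" using M by simp
    then have e: "2 * (a \<bullet> b) / (b \<bullet> b) = 1" unfolding m_def .
    have "sref b a = a - b" unfolding sref_def e by simp
    then show ?thesis using sref_R[OF b a] by simp
  next
    assume "N = 1"
    then have "n = 1" using N by simp
    moreover have "2 * (b \<bullet> a) / (a \<bullet> a) = n" unfolding n_def by (simp only: inner_commute)
    ultimately have e: "2 * (b \<bullet> a) / (a \<bullet> a) = 1" by metis
    have "sref a b = b - a" unfolding sref_def e by simp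
    then have "b - a \<in> R" using sref_R[OF a b] by simp
    then show ?thesis using neg_R by fastforce
  qed
qed

lemma lemA':
  assumes a: "a \<in> R" and b: "b \<in> R" and ab: "a \<noteq> - b" and neg: "a \<bullet> b < 0"
  shows "a + b \<in> R"
  using lemA[OF a neg_R[OF b]] ab neg inner_ge_zero[of b] by force


end


context rsys
begin

lemma some_pos_nonneg: "x \<in> R \<Longrightarrow> i \<in> \<Delta> \<Longrightarrow> co x i > 0 \<Longrightarrow> \<forall>k\<in>\<Delta>. co x k \<ge> 0"
  using R_sign_co[of x] by force

lemma mixed_notR: "i \<in> \<Delta> \<Longrightarrow> k \<in> \<Delta> \<Longrightarrow> co x i > 0 \<Longrightarrow> co x k < 0 \<Longrightarrow> x \<notin> R"
  using R_sign_co[of x] by force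

lemma simple_diff_notR: "\<alpha> \<in> \<Delta> \<Longrightarrow> j \<in> \<Delta> \<Longrightarrow> j \<noteq> \<alpha> \<Longrightarrow> j - \<alpha> \<notin> R"
  by (rule mixed_notR[of j \<alpha>]) auto

lemma simple_inner: "\<alpha> \<in> \<Delta> \<Longrightarrow> j \<in> \<Delta> \<Longrightarrow> j \<noteq> \<alpha> \<Longrightarrow> \<alpha> \<bullet> j \<le> 0"
proof (rule ccontr)
  assume a: "\<alpha> \<in> \<Delta>" "j \<in> \<Delta>" "j \<noteq> \<alpha>" "\<not> \<alpha> \<bullet> j \<le> 0"
  then have "\<alpha> - j \<in> R" using lemA[of \<alpha> j] DR by auto
  then have "- (\<alpha> - j) \<in> R" by (rule neg_R)
  then show False using simple_diff_notR[OF a(1,2,3)] by simp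
qed

lemma pos_OA:
  assumes a: "\<alpha> \<in> \<Delta>" and x: "x \<in> R" and nn: "\<forall>i\<in>\<Delta>. co x i \<ge> 0" and xa: "x \<noteq> \<alpha>"
  shows "\<exists>i\<in>\<Delta>. i \<noteq> \<alpha> \<and> co x i > 0"
proof (rule ccontr)
  assume "\<not> ?thesis"
  then have z: "\<forall>i\<in>\<Delta>. i \<noteq> \<alpha> \<longrightarrow> co x i = 0" using nn by force
  have "x = co x \<alpha> *\<^sub>R \<alpha>"
    by (rule co_eqI) (use z a in auto)
  then have "co x \<alpha> = 1 \<or> co x \<alpha> = -1" using reduced[of \<alpha> "co x \<alpha>"] x a DR by auto
  moreover have "co x \<alpha> \<ge> 0" using nn a by auto
  ultimately have "co x \<alpha> = 1" by auto
  then show False using \<open>x = co x \<alpha> *\<^sub>R \<alpha>\<close> xa by simp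
qed

lemma KL:
  assumes a: "\<alpha> \<in> \<Delta>" and j: "j \<in> \<Delta>" and ja: "j \<noteq> \<alpha>"
    and q: "q \<in> R" and r: "r \<in> R" and rq: "r = q + j - \<alpha>"
    and qa: "q - \<alpha> \<notin> R" and qa': "q \<noteq> \<alpha>" and rj: "r \<noteq> j"
    and qj: "q \<noteq> j" and qj': "q \<noteq> - j"
  shows False
proof -
  have aR: "\<alpha> \<in> R" and jR: "j \<in> R" using a j DR by auto
  have h1: "q \<bullet> \<alpha> \<le> 0" using lemA[OF q aR qa'] qa by (meson not_le)
  have h2: "r \<bullet> j \<le> 0"
  proof (rule ccontr)
    assume "\<not> r \<bullet> j \<le> 0"
    then have "r - j \<in> R" using lemA[OF r jR rj] by simp
    moreover have "r - j = q - \<alpha>" using rq by simp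
    ultimately show False using qa by simp
  qed
  have rq': "r \<noteq> q" using rq ja by auto
  have h3: "r \<bullet> q \<le> 0"
  proof (rule ccontr)
    assume "\<not> r \<bullet> q \<le> 0"
    then have "r - q \<in> R" using lemA[OF r q rq'] by simp
    moreover have "r - q = j - \<alpha>" using rq by simp
    ultimately show False using simple_diff_notR[OF a j ja] by simp
  qed
  have h4: "\<alpha> \<bullet> j \<le> 0" by (rule simple_inner[OF a j ja])
  have sc: "(q \<bullet> j)^2 < (q \<bullet> q) * (j \<bullet> j)" by (rule SCS[OF q jR qj qj'])
  have Q: "q \<bullet> q > 0" and A: "j \<bullet> j > 0" using R_sq_pos q jR by auto
  have e3: "r \<bullet> q = q \<bullet> q + j \<bullet> q - \<alpha> \<bullet> q"
    unfolding rq by (simp add: inner_add_left inner_diff_left)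
  have e2: "r \<bullet> j = q \<bullet> j + j \<bullet> j - \<alpha> \<bullet> j"
    unfolding rq by (simp add: inner_add_left inner_diff_left)
  note cm = inner_commute[of q j] inner_commute[of q \<alpha>]
  have b1: "q \<bullet> j \<le> - (q \<bullet> q)" using e3 h3 h1 cm by linarith
  have b2: "q \<bullet> j \<le> - (j \<bullet> j)" using e2 h2 h4 by linarith
  have "(q \<bullet> q) * (j \<bullet> j) \<le> (- (q \<bullet> j)) * (- (q \<bullet> j))"
    by (rule mult_mono) (insert b1 b2 Q A, linarith)+
  then have "(q \<bullet> q) * (j \<bullet> j) \<le> (q \<bullet> j)^2" by (simp add: power2_eq_square)
  then show False using sc by linarith
qed

lemma US:
  assumes a: "\<alpha> \<in> \<Delta>" and x: "x \<in> R" and i: "i \<in> \<Delta>" "i \<noteq> \<alpha>" "co x i \<noteq> 0"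
    and xn: "x + real n *\<^sub>R \<alpha> \<in> R" and kn: "k \<le> n"
  shows "x + real k *\<^sub>R \<alpha> \<in> R"
proof (rule ccontr)
  assume nk: "x + real k *\<^sub>R \<alpha> \<notin> R"
  have aR: "\<alpha> \<in> R" using a DR by auto
  have ne: "x + t *\<^sub>R \<alpha> \<noteq> \<alpha>" "x + t *\<^sub>R \<alpha> \<noteq> - \<alpha>" for t
  proof -
    have c: "co (x + t *\<^sub>R \<alpha>) i = co x i" using i a by simp
    show "x + t *\<^sub>R \<alpha> \<noteq> \<alpha>"
    proof
      assume "x + t *\<^sub>R \<alpha> = \<alpha>"
      then have "co (x + t *\<^sub>R \<alpha>) i = co \<alpha> i" by simp
      then show False using c i a by simp
    qed
    show "x + t *\<^sub>R \<alpha> \<noteq> - \<alpha>"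
    proof
      assume "x + t *\<^sub>R \<alpha> = - \<alpha>"
      then have "co (x + t *\<^sub>R \<alpha>) i = co (- \<alpha>) i" by simp
      then show False using c i a by simp
    qed
  qed
  define P where "P k \<longleftrightarrow> k \<le> n \<and> x + real k *\<^sub>R \<alpha> \<notin> R" for k
  define k2 where "k2 = (LEAST k. P k)"
  have Pk: "P k" unfolding P_def using nk kn by simp
  have P2: "P k2" unfolding k2_def by (rule LeastI[of P, OF Pk])
  have P2a: "k2 \<le> n" and P2b: "x + real k2 *\<^sub>R \<alpha> \<notin> R" using P2 unfolding P_def by auto
  have below: "x + real k' *\<^sub>R \<alpha> \<in> R" if "k' < k2" for k'
  proof -
    have "\<not> P k'" using not_less_Least[of k' P] that unfolding k2_def by blast
    moreover have "k' \<le> n" using that P2a by simp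
    ultimately show ?thesis unfolding P_def by simp
  qed
  have k2pos: "k2 > 0"
  proof (rule ccontr)
    assume "\<not> k2 > 0"
    then have "k2 = 0" by simp
    then show False using P2b x by simp
  qed
  have k2n: "k2 < n"
  proof -
    have "k2 \<noteq> n" using P2b xn by metis
    then show ?thesis using P2a by simp
  qed
  have r2: "real (k2 - 1) = real k2 - 1" using k2pos by (simp add: of_nat_diff)
  define y1 where "y1 = x + real (k2 - 1) *\<^sub>R \<alpha>"
  have y1R: "y1 \<in> R" unfolding y1_def by (rule below) (use k2pos in simp)
  have "y1 + \<alpha> = x + real k2 *\<^sub>R \<alpha>" unfolding y1_def r2 by (simp add: scaleR_diff_left)
  then have "y1 + \<alpha> \<notin> R" using P2b by simp
  moreover have "y1 \<noteq> - \<alpha>" unfolding y1_def by (rule ne(2))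
  ultimately have g1: "y1 \<bullet> \<alpha> \<ge> 0" using lemA'[OF y1R aR] by (meson not_le)
  define Q where "Q k \<longleftrightarrow> k2 < k \<and> k \<le> n \<and> x + real k *\<^sub>R \<alpha> \<in> R" for k
  define k3 where "k3 = (LEAST k. Q k)"
  have Qn: "Q n" unfolding Q_def using k2n xn by simp
  have Q3: "Q k3" unfolding k3_def by (rule LeastI[of Q, OF Qn])
  have Q3a: "k2 < k3" and Q3b: "k3 \<le> n" and Q3c: "x + real k3 *\<^sub>R \<alpha> \<in> R"
    using Q3 unfolding Q_def by auto
  have r3: "real (k3 - 1) = real k3 - 1" using Q3a by (simp add: of_nat_diff)
  define y3 where "y3 = x + real k3 *\<^sub>R \<alpha>"
  have y3R: "y3 \<in> R" using Q3c unfolding y3_def .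
  have "y3 - \<alpha> = x + real (k3 - 1) *\<^sub>R \<alpha>" unfolding y3_def r3 by (simp add: scaleR_diff_left)
  moreover have "x + real (k3 - 1) *\<^sub>R \<alpha> \<notin> R"
  proof (cases "k3 - 1 = k2")
    case True then show ?thesis using P2b by simp
  next
    case False
    then have lt: "k2 < k3 - 1" using Q3a by simp
    have "k3 - 1 < k3" using Q3a by simp
    then have "\<not> Q (k3 - 1)" using not_less_Least[of "k3 - 1" Q] unfolding k3_def by blast
    moreover have "k3 - 1 \<le> n" using Q3b by simp
    ultimately show ?thesis using lt unfolding Q_def by blast
  qed
  ultimately have "y3 - \<alpha> \<notin> R" by simp
  moreover have "y3 \<noteq> \<alpha>" unfolding y3_def by (rule ne(1))
  ultimately have g3: "y3 \<bullet> \<alpha> \<le> 0" using lemA[OF y3R aR] by (meson not_le)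
  have e1: "y1 \<bullet> \<alpha> = x \<bullet> \<alpha> + (real k2 - 1) * (\<alpha> \<bullet> \<alpha>)"
    unfolding y1_def r2 by (simp add: inner_add_left)
  have e3: "y3 \<bullet> \<alpha> = x \<bullet> \<alpha> + real k3 * (\<alpha> \<bullet> \<alpha>)"
    unfolding y3_def by (simp add: inner_add_left)
  have aa: "\<alpha> \<bullet> \<alpha> > 0" using R_sq_pos aR by simp
  have "real k3 > real k2 - 1" using Q3a by simp
  then have "real k3 * (\<alpha> \<bullet> \<alpha>) > (real k2 - 1) * (\<alpha> \<bullet> \<alpha>)"
    using aa by (simp add: mult_strict_right_mono)
  then show False using e1 e3 g1 g3 by linarith
qed


end


context rsys
begin

lemma SM:
  assumes a: "\<alpha> \<in> \<Delta>" and j: "j \<in> \<Delta>" and ja: "j \<noteq> \<alpha>"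
    and x: "x \<in> R" and nn: "\<forall>i\<in>\<Delta>. co x i \<ge> 0"
    and i0: "i0 \<in> \<Delta>" "i0 \<noteq> \<alpha>" "co x i0 > 0"
    and xj: "x + j \<in> R" and y: "y \<in> R"
    and ysim: "\<forall>i\<in>\<Delta>. i \<noteq> \<alpha> \<longrightarrow> co y i = co (x + j) i"
  shows "\<exists>z\<in>R. (\<forall>i\<in>\<Delta>. i \<noteq> \<alpha> \<longrightarrow> co z i = co x i) \<and> co z \<alpha> \<le> co y \<alpha>"
proof (cases "co x \<alpha> \<le> co y \<alpha>")
  case True
  then show ?thesis using x by blast
next
  case False
  have jR: "j \<in> R" and aR: "\<alpha> \<in> R" using j a DR by auto
  have cja: "co j \<alpha> = 0" using j ja by simp
  have "co x \<alpha> - co y \<alpha> \<in> \<int>" using R_int x y a by (simp add: Ints_diff)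
  then obtain m :: int where m: "co x \<alpha> - co y \<alpha> = of_int m" by (auto elim: Ints_cases)
  define n where "n = nat m"
  have mpos: "m > 0" using False m by simp
  have nm: "real n = co x \<alpha> - co y \<alpha>" using m mpos n_def by simp
  have yn: "y + real n *\<^sub>R \<alpha> = x + j"
  proof (rule co_eqI)
    fix i assume i: "i \<in> \<Delta>"
    show "co (y + real n *\<^sub>R \<alpha>) i = co (x + j) i"
    proof (cases "i = \<alpha>")
      case True then show ?thesis using nm cja a by simp
    next
      case False then show ?thesis using ysim i a by simp
    qed
  qed
  have cyj: "co y j = co x j + 1" using ysim j ja by simp
  have cxj: "co x j \<ge> 0" using nn j by simp
  have ystr: "y + real k *\<^sub>R \<alpha> \<in> R" if "k \<le> n" for k
    by (rule US[OF a y j ja _ _ that]) (use cyj cxj yn xj in auto)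
  define w where "w k = y - j + real k *\<^sub>R \<alpha>" for k
  have wn: "w n = x" unfolding w_def using yn by (simp add: algebra_simps)
  define k0 where "k0 = (LEAST k. w k \<in> R)"
  have wk0: "w k0 \<in> R" unfolding k0_def by (rule LeastI[of "\<lambda>k. w k \<in> R" n]) (simp add: wn x)
  have k0n: "k0 \<le> n" unfolding k0_def by (rule Least_le) (simp add: wn x)
  have coj: "co (y - j) i = co x i" if "i \<in> \<Delta>" "i \<noteq> \<alpha>" for i
    using ysim that by simp
  show ?thesis
  proof (cases "k0 = 0")
    case True
    have "w 0 \<in> R" using wk0 True by simp
    then have "y - j \<in> R" unfolding w_def by simp
    moreover have "co (y - j) \<alpha> = co y \<alpha>" using cja by simp
    ultimately show ?thesis using coj by (intro bexI[of _ "y - j"]) auto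
  next
    case False
    define q where "q = w k0"
    define r where "r = y + real (k0 - 1) *\<^sub>R \<alpha>"
    have rk: "real (k0 - 1) = real k0 - 1" using False by (simp add: of_nat_diff)
    have qR: "q \<in> R" using wk0 q_def by simp
    have "w (k0 - 1) \<notin> R" using not_less_Least[of "k0 - 1" "\<lambda>k. w k \<in> R"] False
      unfolding k0_def by simp
    moreover have "w (k0 - 1) = q - \<alpha>" unfolding q_def w_def rk by (simp add: algebra_simps)
    ultimately have qa: "q - \<alpha> \<notin> R" by simp
    have rR: "r \<in> R" unfolding r_def by (rule ystr) (use k0n in simp)
    have rq: "r = q + j - \<alpha>" unfolding r_def q_def w_def rk by (simp add: algebra_simps)
    have coq: "co q i = co x i" if "i \<in> \<Delta>" "i \<noteq> \<alpha>" for i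
      using coj[OF that] that a unfolding q_def w_def by simp
    have qa': "q \<noteq> \<alpha>"
    proof
      assume "q = \<alpha>"
      then have "co q i0 = 0" using i0 a by simp
      then show False using coq[OF i0(1,2)] i0 by simp
    qed
    have rj: "r \<noteq> j"
    proof
      assume "r = j"
      have "co r i0 = co y i0" unfolding r_def using i0 a by simp
      also have "\<dots> = co x i0 + co j i0" using ysim i0 by simp
      finally have "co r i0 > co j i0" using i0 by simp
      then show False using \<open>r = j\<close> by simp
    qed
    have qj: "q \<noteq> j"
    proof
      assume "q = j"
      then have "r = j + j - \<alpha>" using rq by simp
      then have "co r j = 2" "co r \<alpha> = -1" using j a ja by auto
      then show False using mixed_notR[OF j a, of r] rR by simp
    qed
    have qj': "q \<noteq> - j"
    proof
      assume "q = - j"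
      then have "co q j = -1" using j by simp
      then show False using coq[OF j ja] cxj by simp
    qed
    show ?thesis using KL[OF a j ja qR rR rq qa qa' rj qj qj'] by simp
  qed
qed

end


context rsys
begin

lemma CH:
  assumes g: "\<gamma> \<in> R" and d: "\<delta> \<in> R" and nn: "\<forall>i\<in>\<Delta>. co \<gamma> i \<ge> 0"
    and le: "\<forall>i\<in>\<Delta>. co \<gamma> i \<le> co \<delta> i" and ne: "\<gamma> \<noteq> \<delta>"
  shows "\<exists>j\<in>\<Delta>. (\<delta> - j \<in> R \<and> (\<forall>i\<in>\<Delta>. co \<gamma> i \<le> co (\<delta> - j) i))
              \<or> (\<gamma> + j \<in> R \<and> (\<forall>i\<in>\<Delta>. co (\<gamma> + j) i \<le> co \<delta> i))"
proof -
  define d where "d = \<delta> - \<gamma>"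
  have "d \<noteq> 0" using ne d_def by simp
  then have dd: "d \<bullet> d > 0" by simp
  have e: "(\<Sum>i\<in>\<Delta>. co d i *\<^sub>R i) = d" by (rule expand[symmetric])
  have "d \<bullet> d = (\<Sum>i\<in>\<Delta>. co d i *\<^sub>R i) \<bullet> d" by (simp only: e)
  also have "\<dots> = (\<Sum>i\<in>\<Delta>. co d i * (i \<bullet> d))" by (simp add: inner_sum_left)
  finally have dsum: "d \<bullet> d = (\<Sum>i\<in>\<Delta>. co d i * (i \<bullet> d))" .
  obtain i where i: "i \<in> \<Delta>" and ip: "co d i * (i \<bullet> d) > 0"
  proof (rule ccontr)
    assume "\<not> thesis"
    then have "\<forall>i\<in>\<Delta>. co d i * (i \<bullet> d) \<le> 0" using that by (meson not_le)
    then have "(\<Sum>i\<in>\<Delta>. co d i * (i \<bullet> d)) \<le> 0" by (intro sum_nonpos) auto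
    then show False using dsum dd by simp
  qed
  have cdi: "co d i \<ge> 0" using le i d_def by simp
  have cdp: "co d i > 0" using ip cdi by (cases "co d i = 0") auto
  have idp: "i \<bullet> d > 0" using ip cdp by (simp add: zero_less_mult_iff)
  have "co d i \<in> \<int>" unfolding d_def using R_int g d i by (simp add: Ints_diff)
  then obtain m :: int where m: "co d i = of_int m" by (auto elim: Ints_cases)
  have cd1: "co d i \<ge> 1" using cdp m by simp
  have iR: "i \<in> R" using i DR by auto
  have diff: "\<delta> \<bullet> i - \<gamma> \<bullet> i > 0" using idp unfolding d_def by (simp add: inner_diff_right inner_commute)
  show ?thesis
  proof (cases "\<delta> \<bullet> i > 0")
    case True
    have di: "\<delta> \<noteq> i"
    proof
      assume di: "\<delta> = i"
      have "\<gamma> = 0"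
      proof (rule co_eqI)
        fix k assume k: "k \<in> \<Delta>"
        show "co \<gamma> k = co 0 k"
        proof (cases "k = i")
          case True
          have "co \<gamma> i \<le> 0" using cd1 unfolding d_def di using i by simp
          moreover have "co \<gamma> i \<ge> 0" using nn i by blast
          ultimately show ?thesis using True by simp
        next
          case False
          then show ?thesis using le nn k di i by force
        qed
      qed
      then show False using g R_nz by simp
    qed
    have "\<delta> - i \<in> R" by (rule lemA[OF d iR di True])
    moreover have "\<forall>k\<in>\<Delta>. co \<gamma> k \<le> co (\<delta> - i) k"
      using le cd1 i unfolding d_def by auto
    ultimately show ?thesis using i by blast
  next
    case False
    then have gi: "\<gamma> \<bullet> i < 0" using diff by simp
    have gni: "\<gamma> \<noteq> - i"
    proof
      assume "\<gamma> = - i"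
      then have "co \<gamma> i = -1" using i by simp
      then show False using nn i by force
    qed
    have "\<gamma> + i \<in> R" by (rule lemA'[OF g iR gni gi])
    moreover have "\<forall>k\<in>\<Delta>. co (\<gamma> + i) k \<le> co \<delta> k"
      using le cd1 i unfolding d_def by auto
    ultimately show ?thesis using i by blast
  qed
qed

definition ht :: "'a \<Rightarrow> real" where "ht x = (\<Sum>i\<in>\<Delta>. co x i)"

lemma ht_diff: "j \<in> \<Delta> \<Longrightarrow> ht (x - j) = ht x - 1"
  unfolding ht_def by (simp add: sum_subtractf finD)
lemma ht_add: "j \<in> \<Delta> \<Longrightarrow> ht (x + j) = ht x + 1"
  unfolding ht_def by (simp add: sum.distrib finD)

lemma MONO:
  assumes a: "\<alpha> \<in> \<Delta>"
  shows "\<forall>\<gamma> \<delta>. \<gamma> \<in> R \<longrightarrow> \<delta> \<in> R \<longrightarrow> (\<forall>i\<in>\<Delta>. co \<gamma> i \<ge> 0)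
     \<longrightarrow> (\<exists>i0\<in>\<Delta>. i0 \<noteq> \<alpha> \<and> co \<gamma> i0 > 0) \<longrightarrow> (\<forall>i\<in>\<Delta>. co \<gamma> i \<le> co \<delta> i)
     \<longrightarrow> ht \<delta> - ht \<gamma> = real n
     \<longrightarrow> (\<forall>y\<in>R. (\<forall>i\<in>\<Delta>. i \<noteq> \<alpha> \<longrightarrow> co y i = co \<delta> i)
          \<longrightarrow> (\<exists>z\<in>R. (\<forall>i\<in>\<Delta>. i \<noteq> \<alpha> \<longrightarrow> co z i = co \<gamma> i) \<and> co z \<alpha> \<le> co y \<alpha>))"
proof (induction n)
  case 0
  show ?case
  proof (intro allI impI ballI)
    fix \<gamma> \<delta> y
    assume g: "\<gamma> \<in> R" and d: "\<delta> \<in> R" and le: "\<forall>i\<in>\<Delta>. co \<gamma> i \<le> co \<delta> i"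
      and h: "ht \<delta> - ht \<gamma> = real 0" and y: "y \<in> R"
      and ys: "\<forall>i\<in>\<Delta>. i \<noteq> \<alpha> \<longrightarrow> co y i = co \<delta> i"
    have "(\<Sum>i\<in>\<Delta>. co \<delta> i - co \<gamma> i) = 0" using h unfolding ht_def by (simp add: sum_subtractf)
    then have "\<forall>i\<in>\<Delta>. co \<delta> i - co \<gamma> i = 0"
      using sum_nonneg_eq_0_iff[OF finD, of "\<lambda>i. co \<delta> i - co \<gamma> i"] le by simp
    then have "\<gamma> = \<delta>" by (intro co_eqI) simp
    then show "\<exists>z\<in>R. (\<forall>i\<in>\<Delta>. i \<noteq> \<alpha> \<longrightarrow> co z i = co \<gamma> i) \<and> co z \<alpha> \<le> co y \<alpha>"
      using y ys by blast
  qed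
next
  case (Suc n)
  show ?case
  proof (intro allI impI ballI)
    fix \<gamma> \<delta> y
    assume g: "\<gamma> \<in> R" and d: "\<delta> \<in> R" and nn: "\<forall>i\<in>\<Delta>. co \<gamma> i \<ge> 0"
      and oa: "\<exists>i0\<in>\<Delta>. i0 \<noteq> \<alpha> \<and> co \<gamma> i0 > 0"
      and le: "\<forall>i\<in>\<Delta>. co \<gamma> i \<le> co \<delta> i"
      and h: "ht \<delta> - ht \<gamma> = real (Suc n)" and y: "y \<in> R"
      and ys: "\<forall>i\<in>\<Delta>. i \<noteq> \<alpha> \<longrightarrow> co y i = co \<delta> i"
    obtain i0 where i0: "i0 \<in> \<Delta>" "i0 \<noteq> \<alpha>" "co \<gamma> i0 > 0" using oa by blast
    show "\<exists>z\<in>R. (\<forall>i\<in>\<Delta>. i \<noteq> \<alpha> \<longrightarrow> co z i = co \<gamma> i) \<and> co z \<alpha> \<le> co y \<alpha>"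
    proof (cases "\<gamma> = \<delta>")
      case True
      then show ?thesis using y ys by blast
    next
      case False
      from CH[OF g d nn le False] obtain j where j: "j \<in> \<Delta>" and
        cases: "(\<delta> - j \<in> R \<and> (\<forall>i\<in>\<Delta>. co \<gamma> i \<le> co (\<delta> - j) i))
              \<or> (\<gamma> + j \<in> R \<and> (\<forall>i\<in>\<Delta>. co (\<gamma> + j) i \<le> co \<delta> i))" by blast
      from cases show ?thesis
      proof
        assume A: "\<delta> - j \<in> R \<and> (\<forall>i\<in>\<Delta>. co \<gamma> i \<le> co (\<delta> - j) i)"
        define d' where "d' = \<delta> - j"
        have d'R: "d' \<in> R" and le': "\<forall>i\<in>\<Delta>. co \<gamma> i \<le> co d' i" using A d'_def by auto
        have h': "ht d' - ht \<gamma> = real n" using h ht_diff[OF j, of \<delta>] d'_def by simp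
        have "\<exists>y'\<in>R. (\<forall>i\<in>\<Delta>. i \<noteq> \<alpha> \<longrightarrow> co y' i = co d' i) \<and> co y' \<alpha> \<le> co y \<alpha>"
        proof (cases "j = \<alpha>")
          case True
          then show ?thesis using y ys d'_def a by (intro bexI[of _ y]) auto
        next
          case False
          have nn': "\<forall>i\<in>\<Delta>. co d' i \<ge> 0" using nn le' by (meson order_trans)
          have "co d' i0 > 0" using i0 le' by (meson less_le_trans)
          moreover have "d' + j \<in> R" using d d'_def by simp
          moreover have "\<forall>i\<in>\<Delta>. i \<noteq> \<alpha> \<longrightarrow> co y i = co (d' + j) i" using ys d'_def by simp
          ultimately show ?thesis using SM[OF a j False d'R nn' i0(1,2) _ _ y] by blast
        qed
        then obtain y' where y': "y' \<in> R" "\<forall>i\<in>\<Delta>. i \<noteq> \<alpha> \<longrightarrow> co y' i = co d' i" "co y' \<alpha> \<le> co y \<alpha>"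
          by blast
        from Suc.IH[rule_format, OF g d'R nn[rule_format] oa le'[rule_format] h' y'(1) y'(2)[rule_format]]
        obtain z where "z \<in> R" "\<forall>i\<in>\<Delta>. i \<noteq> \<alpha> \<longrightarrow> co z i = co \<gamma> i" "co z \<alpha> \<le> co y' \<alpha>" by blast
        then show ?thesis using y'(3) by (intro bexI[of _ z]) auto
      next
        assume B: "\<gamma> + j \<in> R \<and> (\<forall>i\<in>\<Delta>. co (\<gamma> + j) i \<le> co \<delta> i)"
        define g' where "g' = \<gamma> + j"
        have g'R: "g' \<in> R" and le': "\<forall>i\<in>\<Delta>. co g' i \<le> co \<delta> i" using B g'_def by auto
        have h': "ht \<delta> - ht g' = real n" using h ht_add[OF j, of \<gamma>] g'_def by simp
        have nn': "\<forall>i\<in>\<Delta>. co g' i \<ge> 0" using nn j unfolding g'_def by simp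
        have oa': "\<exists>i0\<in>\<Delta>. i0 \<noteq> \<alpha> \<and> co g' i0 > 0"
          using i0 j unfolding g'_def by (intro bexI[of _ i0]) (auto simp: add_pos_nonneg)
        from Suc.IH[rule_format, OF g'R d nn'[rule_format] oa' le'[rule_format] h' y ys[rule_format]]
        obtain z' where z': "z' \<in> R" "\<forall>i\<in>\<Delta>. i \<noteq> \<alpha> \<longrightarrow> co z' i = co g' i" "co z' \<alpha> \<le> co y \<alpha>"
          by blast
        show ?thesis
        proof (cases "j = \<alpha>")
          case True
          then show ?thesis using z' g'_def a by (intro bexI[of _ z']) auto
        next
          case False
          have "\<exists>z\<in>R. (\<forall>i\<in>\<Delta>. i \<noteq> \<alpha> \<longrightarrow> co z i = co \<gamma> i) \<and> co z \<alpha> \<le> co z' \<alpha>"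
            using SM[OF a j False g nn i0 _ z'(1)] B z'(2) g'_def by blast
          then show ?thesis using z'(3) by force
        qed
      qed
    qed
  qed
qed

end



lemma Adj_sub: "Adj R \<Delta> A \<subseteq> pos_roots R \<Delta>"
  unfolding Adj_def by auto

lemma Adj_mono: "A \<subseteq> B \<Longrightarrow> Adj R \<Delta> A \<subseteq> Adj R \<Delta> B"
  unfolding Adj_def by auto

lemma nu_dec: "nu_k R \<Delta> (Suc k) u \<subseteq> nu_k R \<Delta> k u"
proof (induction k)
  case 0
  then show ?case using Adj_sub[of R \<Delta>] by auto
next
  case (Suc k)
  have "Adj R \<Delta> (nu_k R \<Delta> (Suc k) u) \<subseteq> Adj R \<Delta> (nu_k R \<Delta> k u)" by (rule Adj_mono[OF Suc.IH])
  then have "u ` Adj R \<Delta> (nu_k R \<Delta> (Suc k) u) \<subseteq> u ` Adj R \<Delta> (nu_k R \<Delta> k u)" by (rule image_mono)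
  then show ?case by auto
qed

lemma nu_sub_P: "nu_k R \<Delta> k u \<subseteq> pos_roots R \<Delta>"
  by (cases k) auto

lemma nu_stab:
  assumes fin: "finite (pos_roots R \<Delta>)"
  shows "\<exists>N. nu_k R \<Delta> (Suc N) u = nu_k R \<Delta> N u"
proof (rule ccontr)
  assume "\<not> ?thesis"
  then have ps: "nu_k R \<Delta> (Suc N) u \<subset> nu_k R \<Delta> N u" for N using nu_dec by blast
  have "card (nu_k R \<Delta> k u) + k \<le> card (pos_roots R \<Delta>)" for k
  proof (induction k)
    case 0
    have "card (nu_k R \<Delta> 0 u) \<le> card (pos_roots R \<Delta>)" by (rule card_mono[OF fin nu_sub_P])
    then show ?case by simp
  next
    case (Suc k)
    have "card (nu_k R \<Delta> (Suc k) u) < card (nu_k R \<Delta> k u)"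
      by (rule psubset_card_mono[OF finite_subset[OF nu_sub_P fin] ps])
    then show ?case using Suc by simp
  qed
  from this[of "Suc (card (pos_roots R \<Delta>))"] show False by simp
qed

lemma nu_const:
  assumes st: "nu_k R \<Delta> (Suc N) u = nu_k R \<Delta> N u" and k: "N \<le> k"
  shows "nu_k R \<Delta> k u = nu_k R \<Delta> N u"
  using k
proof (induction k rule: dec_induct)
  case base
  then show ?case by simp
next
  case (step k)
  have "nu_k R \<Delta> (Suc k) u = u ` Adj R \<Delta> (nu_k R \<Delta> k u) \<inter> pos_roots R \<Delta>" by simp
  also have "\<dots> = u ` Adj R \<Delta> (nu_k R \<Delta> N u) \<inter> pos_roots R \<Delta>" using step.IH by simp
  also have "\<dots> = nu_k R \<Delta> (Suc N) u" by simp
  finally show ?case using st by simp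
qed

lemma nu_eq:
  assumes st: "nu_k R \<Delta> (Suc N) u = nu_k R \<Delta> N u"
  shows "nu R \<Delta> u = nu_k R \<Delta> N u"
  unfolding nu_def
proof (rule the_equality)
  show "\<exists>N'. \<forall>k\<ge>N'. nu_k R \<Delta> k u = nu_k R \<Delta> N u"
    by (rule exI[of _ N]) (use nu_const[OF st] in blast)
next
  fix S assume "\<exists>N'. \<forall>k\<ge>N'. nu_k R \<Delta> k u = S"
  then obtain N' where N': "\<forall>k\<ge>N'. nu_k R \<Delta> k u = S" by blast
  have "nu_k R \<Delta> (max N N') u = S" using N' by (meson max.cobounded2)
  moreover have "nu_k R \<Delta> (max N N') u = nu_k R \<Delta> N u" by (rule nu_const[OF st]) simp
  ultimately show "S = nu_k R \<Delta> N u" by simp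
qed

lemma post_sub:
  assumes T: "T \<subseteq> u ` Adj R \<Delta> T \<inter> pos_roots R \<Delta>"
  shows "T \<subseteq> nu_k R \<Delta> k u"
proof (induction k)
  case 0
  have "u ` Adj R \<Delta> T \<subseteq> u ` pos_roots R \<Delta>" by (rule image_mono[OF Adj_sub])
  then show ?case using T by auto
next
  case (Suc k)
  have "u ` Adj R \<Delta> T \<subseteq> u ` Adj R \<Delta> (nu_k R \<Delta> k u)" by (rule image_mono[OF Adj_mono[OF Suc.IH]])
  then show ?case using T by auto
qed



context rsys
begin

lemma finP: "finite (pos_roots R \<Delta>)"
  using finR unfolding pos_roots_def by simp

lemma weyl_props: "w \<in> weyl R \<Longrightarrow> linear w \<and> inj w \<and> (\<forall>x\<in>R. w x \<in> R)"
proof (induction rule: weyl.induct)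
  case weyl_id
  have "linear (id :: 'a \<Rightarrow> 'a)" by (rule linearI) auto
  moreover have "linear (\<lambda>a::'a. a)" by (rule linearI) auto
  moreover have "inj (id :: 'a \<Rightarrow> 'a)" by simp
  ultimately show ?case by (intro conjI) auto
next
  case (weyl_step a w)
  have "inj (sref a)" using sref_invol[OF R_nz[OF weyl_step(1)]] by (metis injI)
  have l: "linear (sref a \<circ> w)" by (rule linear_compose) (use weyl_step sref_linear in auto)
  have i: "inj (sref a \<circ> w)" by (rule inj_compose) (use weyl_step \<open>inj (sref a)\<close> in auto)
  have r: "\<forall>x\<in>R. (sref a \<circ> w) x \<in> R" using weyl_step sref_R by simp
  show ?case using l i r by blast
qed

lemma PL:
  assumes a: "\<alpha> \<in> \<Delta>" and gP: "\<gamma> \<in> pos_roots R \<Delta>" and dP: "\<delta> \<in> pos_roots R \<Delta>"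
    and ga: "\<gamma> \<noteq> \<alpha>" and gd: "root_le \<Delta> \<gamma> \<delta>"
  shows "\<exists>\<eta>. \<eta> \<in> pos_roots R \<Delta> \<and> root_le \<Delta> \<eta> (sref \<alpha> \<delta>) \<and> (\<exists>t::nat. \<eta> = \<gamma> - real t *\<^sub>R \<alpha>)"
proof -
  have g: "\<gamma> \<in> R" and nn: "\<forall>i\<in>\<Delta>. co \<gamma> i \<ge> 0" using gP pos_co by auto
  have d: "\<delta> \<in> R" using dP pos_co by auto
  have le: "\<forall>i\<in>\<Delta>. co \<gamma> i \<le> co \<delta> i" using le_co[OF g d] gd by simp
  obtain i0 where i0: "i0 \<in> \<Delta>" "i0 \<noteq> \<alpha>" "co \<gamma> i0 > 0" using pos_OA[OF a g nn ga] by blast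
  have aR: "\<alpha> \<in> R" using a DR by auto
  have "ht \<delta> - ht \<gamma> = (\<Sum>i\<in>\<Delta>. co \<delta> i - co \<gamma> i)" unfolding ht_def by (simp add: sum_subtractf)
  moreover have "(\<Sum>i\<in>\<Delta>. co \<delta> i - co \<gamma> i) \<in> \<int>"
    using R_int g d by (intro Ints_sum) (simp add: Ints_diff)
  moreover have "(\<Sum>i\<in>\<Delta>. co \<delta> i - co \<gamma> i) \<ge> 0" using le by (intro sum_nonneg) simp
  ultimately obtain m :: int where m: "ht \<delta> - ht \<gamma> = of_int m" "m \<ge> 0"
  proof -
    assume h: "ht \<delta> - ht \<gamma> = (\<Sum>i\<in>\<Delta>. co \<delta> i - co \<gamma> i)" "(\<Sum>i\<in>\<Delta>. co \<delta> i - co \<gamma> i) \<in> \<int>"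
      "(\<Sum>i\<in>\<Delta>. co \<delta> i - co \<gamma> i) \<ge> 0"
      and th: "\<And>m. ht \<delta> - ht \<gamma> = of_int m \<Longrightarrow> m \<ge> 0 \<Longrightarrow> thesis"
    from h(2) obtain m :: int where "(\<Sum>i\<in>\<Delta>. co \<delta> i - co \<gamma> i) = of_int m" by (auto elim: Ints_cases)
    then show thesis using th h(1,3) by simp
  qed
  define n where "n = nat m"
  have hn: "ht \<delta> - ht \<gamma> = real n" using m n_def by simp
  define y where "y = sref \<alpha> \<delta>"
  have yR: "y \<in> R" unfolding y_def using sref_R[OF aR d] .
  have ys: "\<forall>i\<in>\<Delta>. i \<noteq> \<alpha> \<longrightarrow> co y i = co \<delta> i" unfolding y_def using co_sref_other a by simp
  have oa: "\<exists>i0\<in>\<Delta>. i0 \<noteq> \<alpha> \<and> co \<gamma> i0 > 0" using i0 by blast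
  have "\<exists>z\<in>R. (\<forall>i\<in>\<Delta>. i \<noteq> \<alpha> \<longrightarrow> co z i = co \<gamma> i) \<and> co z \<alpha> \<le> co y \<alpha>"
    using MONO[OF a, of n, rule_format, OF g d nn[rule_format] oa le[rule_format] hn yR ys[rule_format]] .
  then obtain z where z: "z \<in> R" "\<forall>i\<in>\<Delta>. i \<noteq> \<alpha> \<longrightarrow> co z i = co \<gamma> i" "co z \<alpha> \<le> co y \<alpha>"
    by blast
  show ?thesis
  proof (cases "co z \<alpha> \<le> co \<gamma> \<alpha>")
    case True
    have "co \<gamma> \<alpha> - co z \<alpha> \<in> \<int>" using R_int g z(1) a by (simp add: Ints_diff)
    then obtain t' :: int where t': "co \<gamma> \<alpha> - co z \<alpha> = of_int t'" by (auto elim: Ints_cases)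
    define t where "t = nat t'"
    have tt: "real t = co \<gamma> \<alpha> - co z \<alpha>" using t' True t_def by simp
    have zeq: "z = \<gamma> - real t *\<^sub>R \<alpha>"
    proof (rule co_eqI)
      fix i assume i: "i \<in> \<Delta>"
      show "co z i = co (\<gamma> - real t *\<^sub>R \<alpha>) i"
        using z(2) i a tt by (cases "i = \<alpha>") auto
    qed
    have "co z i0 > 0" using z(2) i0 by simp
    then have znn: "\<forall>i\<in>\<Delta>. co z i \<ge> 0" using some_pos_nonneg[OF z(1) i0(1)] by simp
    have zP: "z \<in> pos_roots R \<Delta>" using z(1) znn pos_co by auto
    have "\<forall>i\<in>\<Delta>. co z i \<le> co y i"
    proof
      fix i assume i: "i \<in> \<Delta>"
      show "co z i \<le> co y i"
        using z(2,3) ys le i by (cases "i = \<alpha>") auto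
    qed
    then have "root_le \<Delta> z y" using le_co[OF z(1) yR] by simp
    then show ?thesis using zP zeq unfolding y_def by blast
  next
    case False
    have "\<forall>i\<in>\<Delta>. co \<gamma> i \<le> co y i"
    proof
      fix i assume i: "i \<in> \<Delta>"
      show "co \<gamma> i \<le> co y i"
        using z(3) False ys le i by (cases "i = \<alpha>") auto
    qed
    then have "root_le \<Delta> \<gamma> y" using le_co[OF g yR] by simp
    moreover have "\<gamma> = \<gamma> - real (0::nat) *\<^sub>R \<alpha>" by simp
    ultimately show ?thesis using gP unfolding y_def by blast
  qed
qed

end



context rsys
begin

lemma both_pos: "x \<in> pos_roots R \<Delta> \<Longrightarrow> - x \<in> pos_roots R \<Delta> \<Longrightarrow> False"
proof -
  assume x: "x \<in> pos_roots R \<Delta>" and nx: "- x \<in> pos_roots R \<Delta>"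
  have "x = 0"
  proof (rule co_eqI)
    fix i assume i: "i \<in> \<Delta>"
    have "co x i \<ge> 0" using x i pos_co by auto
    moreover have "co (- x) i \<ge> 0" using nx i pos_co by blast
    ultimately show "co x i = co 0 i" by simp
  qed
  then show False using x pos_co R_nz by auto
qed

lemma simple_pos: "\<alpha> \<in> \<Delta> \<Longrightarrow> \<alpha> \<in> pos_roots R \<Delta>"
  using DR pos_co by auto

lemma s_pos:
  assumes a: "\<alpha> \<in> \<Delta>" and b: "\<beta> \<in> pos_roots R \<Delta>" and ba: "\<beta> \<noteq> \<alpha>"
  shows "sref \<alpha> \<beta> \<in> pos_roots R \<Delta>"
proof -
  have bR: "\<beta> \<in> R" and nn: "\<forall>i\<in>\<Delta>. co \<beta> i \<ge> 0" using b pos_co by auto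
  obtain i0 where i0: "i0 \<in> \<Delta>" "i0 \<noteq> \<alpha>" "co \<beta> i0 > 0" using pos_OA[OF a bR nn ba] by blast
  have sR: "sref \<alpha> \<beta> \<in> R" using sref_R a DR bR by auto
  have "co (sref \<alpha> \<beta>) i0 > 0" using co_sref_other[OF a i0(2)] i0 by simp
  then have "\<forall>i\<in>\<Delta>. co (sref \<alpha> \<beta>) i \<ge> 0" using some_pos_nonneg[OF sR i0(1)] by simp
  then show ?thesis using sR pos_co by auto
qed

lemma main:
  assumes uW: "u \<in> weyl R" and rat: "rational R \<Delta> u"
    and a: "\<alpha> \<in> \<Delta>" and inva: "inv u \<alpha> \<in> pos_roots R \<Delta>" and ua: "- (u \<alpha>) \<in> pos_roots R \<Delta>"
  shows "rational R \<Delta> (sref \<alpha> \<circ> u)"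
proof (rule ccontr)
  assume nrat: "\<not> rational R \<Delta> (sref \<alpha> \<circ> u)"
  define P where "P = pos_roots R \<Delta>"
  define s where "s = sref \<alpha>"
  define V where "V = s \<circ> u"
  have lin: "linear u" and inj: "inj u" and uR: "\<forall>x\<in>R. u x \<in> R" using weyl_props[OF uW] by auto
  have aR: "\<alpha> \<in> R" using a DR by auto
  have anz: "\<alpha> \<noteq> 0" using R_nz aR by simp
  have ss: "s (s x) = x" for x unfolding s_def using sref_invol[OF anz] .
  have slin: "linear s" unfolding s_def by (rule sref_linear)
  have aP: "\<alpha> \<in> P" using simple_pos[OF a] P_def by simp
  define \<rho> where "\<rho> = - (u \<alpha>)"
  have \<rho>P: "\<rho> \<in> P" using ua \<rho>_def P_def by simp
  have ua_eq: "u \<alpha> = - \<rho>" using \<rho>_def by simp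
  have inv_eq: "inv u y = x" if "u x = y" for x y using inv_f_f[OF inj] that by blast
  have uneg: "u (- x) = - u x" for x using lin by (rule linear_neg)
  have \<rho>a: "\<rho> \<noteq> \<alpha>"
  proof
    assume "\<rho> = \<alpha>"
    then have "u (- \<alpha>) = \<alpha>" using uneg ua_eq by simp
    then have "inv u \<alpha> = - \<alpha>" by (rule inv_eq)
    then show False using inva aP both_pos P_def by auto
  qed
  obtain N where N: "nu_k R \<Delta> (Suc N) V = nu_k R \<Delta> N V" using nu_stab[OF finP] by blast
  define S where "S = nu_k R \<Delta> N V"
  have nuV: "nu R \<Delta> V = S" using nu_eq[OF N] S_def by simp
  have Sne: "S \<noteq> {}" using nrat nuV unfolding rational_def V_def s_def by simp
  have Sfix: "S = V ` Adj R \<Delta> S \<inter> P" using N unfolding S_def P_def by simp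
  have SP: "S \<subseteq> P" using Sfix by blast
  have aS: "\<alpha> \<notin> S"
  proof
    assume "\<alpha> \<in> S"
    then obtain \<gamma> where g: "\<gamma> \<in> Adj R \<Delta> S" and ag: "\<alpha> = V \<gamma>" using Sfix by blast
    have gP: "\<gamma> \<in> P" using g Adj_sub P_def by blast
    have "u \<gamma> = s \<alpha>" using ag ss unfolding V_def by simp
    also have "s \<alpha> = - \<alpha>" unfolding s_def by (rule sref_self[OF anz])
    finally have "u (- \<gamma>) = \<alpha>" using uneg by simp
    then have "inv u \<alpha> = - \<gamma>" by (rule inv_eq)
    then show False using inva gP both_pos P_def by auto
  qed
  define J where "J = Adj R \<Delta> (s ` S)"
  define T where "T = u ` J \<inter> P"
  have key: "\<exists>\<eta>. \<eta> \<in> J \<and> u \<eta> \<in> P \<and> root_le \<Delta> (s \<beta>) (u \<eta>)" if bS: "\<beta> \<in> S" for \<beta>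
  proof -
    obtain \<gamma> where g: "\<gamma> \<in> Adj R \<Delta> S" and bg: "\<beta> = V \<gamma>" using bS Sfix by blast
    have bP: "\<beta> \<in> P" using bS SP by blast
    have gP: "\<gamma> \<in> P" using g Adj_sub P_def by blast
    obtain \<delta> where dS: "\<delta> \<in> S" and gd: "root_le \<Delta> \<gamma> \<delta>" using g unfolding Adj_def by blast
    have dP: "\<delta> \<in> P" using dS SP by blast
    have ug: "u \<gamma> = s \<beta>" using bg ss unfolding V_def by simp
    have ga: "\<gamma> \<noteq> \<alpha>"
    proof
      assume "\<gamma> = \<alpha>"
      then have "\<beta> = s (- \<rho>)" using bg ua_eq unfolding V_def by simp
      also have "\<dots> = - s \<rho>" using slin by (rule linear_neg)
      finally have "- \<beta> = s \<rho>" by simp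
      moreover have "s \<rho> \<in> P" using s_pos[OF a _ \<rho>a] \<rho>P unfolding s_def P_def by simp
      ultimately have "- \<beta> \<in> pos_roots R \<Delta>" using P_def by simp
      then show False using bP both_pos P_def by blast
    qed
    obtain \<eta> t where eP: "\<eta> \<in> P" and el: "root_le \<Delta> \<eta> (s \<delta>)" and et: "\<eta> = \<gamma> - real t *\<^sub>R \<alpha>"
      using PL[OF a _ _ ga gd] gP dP unfolding P_def s_def by blast
    have eJ: "\<eta> \<in> J" unfolding J_def Adj_def using eP el dS P_def by blast
    have "u \<eta> = u \<gamma> - real t *\<^sub>R u \<alpha>" unfolding et using lin by (simp add: linear_diff linear_scale)
    then have ue: "u \<eta> = s \<beta> + real t *\<^sub>R \<rho>" using ug ua_eq by simp
    have ba: "\<beta> \<noteq> \<alpha>" using bS aS by blast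
    have sbP: "s \<beta> \<in> P" using s_pos[OF a _ ba] bP unfolding s_def P_def by simp
    have eR: "\<eta> \<in> R" using eP P_def pos_co by auto
    have ueR: "u \<eta> \<in> R" using uR eR by blast
    have sbR: "s \<beta> \<in> R" using sbP P_def pos_co by auto
    have cmp: "\<forall>i\<in>\<Delta>. co (s \<beta>) i \<le> co (u \<eta>) i"
    proof
      fix i assume i: "i \<in> \<Delta>"
      have "co \<rho> i \<ge> 0" using \<rho>P i P_def pos_co by auto
      then show "co (s \<beta>) i \<le> co (u \<eta>) i" unfolding ue by simp
    qed
    have "\<forall>i\<in>\<Delta>. co (u \<eta>) i \<ge> 0"
    proof
      fix i assume i: "i \<in> \<Delta>"
      have "co (s \<beta>) i \<ge> 0" using sbP i P_def pos_co by auto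
      then show "co (u \<eta>) i \<ge> 0" using cmp i by fastforce
    qed
    then have ueP: "u \<eta> \<in> P" using ueR P_def pos_co by auto
    have "root_le \<Delta> (s \<beta>) (u \<eta>)" using le_co[OF sbR ueR] cmp by simp
    then show ?thesis using eJ ueP by blast
  qed
  have Tpost: "T \<subseteq> u ` Adj R \<Delta> T \<inter> P"
  proof
    fix x assume xT: "x \<in> T"
    then obtain y where yJ: "y \<in> J" and xy: "x = u y" and xP: "x \<in> P" unfolding T_def by blast
    from yJ obtain b where yP: "y \<in> pos_roots R \<Delta>" and bs: "b \<in> s ` S" and yb: "root_le \<Delta> y b"
      unfolding J_def Adj_def by blast
    from bs obtain \<beta> where bS: "\<beta> \<in> S" and b: "b = s \<beta>" by blast
    obtain \<eta> where eJ: "\<eta> \<in> J" and ueP: "u \<eta> \<in> P" and le: "root_le \<Delta> (s \<beta>) (u \<eta>)"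
      using key[OF bS] by blast
    have ueT: "u \<eta> \<in> T" unfolding T_def using eJ ueP by blast
    have "root_le \<Delta> y (u \<eta>)" using root_le_trans[OF yb[unfolded b] le] .
    then have "y \<in> Adj R \<Delta> T" unfolding Adj_def using yP ueT by blast
    then show "x \<in> u ` Adj R \<Delta> T \<inter> P" using xy xP by blast
  qed
  obtain \<beta> where "\<beta> \<in> S" using Sne by blast
  then obtain \<eta> where "\<eta> \<in> J" "u \<eta> \<in> P" using key by blast
  then have Tne: "T \<noteq> {}" unfolding T_def by blast
  obtain M where M: "nu_k R \<Delta> (Suc M) u = nu_k R \<Delta> M u" using nu_stab[OF finP] by blast
  have "T \<subseteq> nu_k R \<Delta> M u" by (rule post_sub) (use Tpost P_def in simp)
  then have "nu R \<Delta> u \<noteq> {}" using nu_eq[OF M] Tne by auto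
  then show False using rat unfolding rational_def by simp
qed

end

theorem lemma4:
  fixes R \<Delta> :: "'a::euclidean_space set" and u :: "'a \<Rightarrow> 'a" and \<alpha> :: 'a
  assumes "root_system R" and "is_base R \<Delta>" and "indecomposable R"
    and "u \<in> weyl R" and "rational R \<Delta> u" and "u \<noteq> longest R \<Delta>"
    and "\<alpha> \<in> \<Delta>" and "inv u \<alpha> \<in> pos_roots R \<Delta>" and "- (u \<alpha>) \<in> pos_roots R \<Delta>"
  shows "rational R \<Delta> (sref \<alpha> \<circ> u)"
proof -
  interpret rsys R \<Delta> using assms(1,2) by unfold_locales
  show ?thesis using main assms(4,5,7,8,9) by blast
qed


end
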